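(* For all real $\alpha,\alpha',\beta,\beta'$ with $\beta'\neq0$, every integer $n\ge0$, every integer $0\le k\le n$, and every real $x$, \[ \langle-\alpha-\beta x\rangle_n=\sum_{j=0}^{n}(-1)^jS_{\alpha-\frac{\alpha'}{\beta'}\beta,\ \frac{\beta}{\beta'}}(n,j)\,\langle-\alpha'-\beta'x\rangle_j, \] \[ S_{\alpha,\beta}(n,k)=\sum_{j=k}^{n}(-1)^jS_{\alpha-\frac{\alpha'}{\beta'}\beta,\ \frac{\beta}{\beta'}}(n,j)\,S_{\alpha',\beta'}(j,k). \]
   Context: For real $a$ and integer $n\ge 1$, $\langle a\rangle_n:=a(a+1)\cdots(a+n-1)$ and $\langle a\rangle_0:=1$. For real $\alpha,\beta$ and integers $0\le k\le n$, $S_{\alpha,\beta}(n,k):=\frac{1}{k!}\sum_{j=0}^{k}(-1)^{k-j}\binom{k}{j}\langle-\alpha-\beta j\rangle_n$. *)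

theory Defs
  imports Complex_Main
begin

text \<open>Rising factorial: the library's pochhammer a n = a(a+1)...(a+n-1), pochhammer a 0 = 1.\<close>

definition S_ab :: "real \<Rightarrow> real \<Rightarrow> nat \<Rightarrow> nat \<Rightarrow> real" where
  "S_ab \<alpha> \<beta> n k = (1 / fact k) *
     (\<Sum>j = 0..k. (-1) ^ (k - j) * of_nat (k choose j) * pochhammer (- \<alpha> - \<beta> * of_nat j) n)"

end

theory Submission imports Defs begin

fun cc :: "real \<Rightarrow> real \<Rightarrow> nat \<Rightarrow> nat \<Rightarrow> real" where
  "cc a b 0 k = (if k = 0 then 1 else 0)"
| "cc a b (Suc n) k = (if k = 0 then 0 else b * cc a b n (k - 1)) + (of_nat n - a - b * of_nat k) * cc a b n k"

lemma cc_zero: "n < k \<Longrightarrow> cc a b n k = 0"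
  by (induction n arbitrary: k) auto

lemma poch_step: "pochhammer (-y::real) k * (of_nat n - a - b * y) =
   b * pochhammer (-y) (Suc k) + (of_nat n - a - b * of_nat k) * pochhammer (-y) k"
  by (simp add: pochhammer_Suc algebra_simps)

lemma expand: "pochhammer (- a - b * y) n = (\<Sum>k\<le>n. cc a b n k * pochhammer (-y) k)"
proof (induction n)
  case 0
  then show ?case by simp
next
  case (Suc n)
  have "pochhammer (- a - b * y) (Suc n) = (\<Sum>k\<le>n. cc a b n k * pochhammer (-y) k) * (of_nat n - a - b * y)"
    by (simp add: pochhammer_Suc Suc.IH algebra_simps)
  also have "\<dots> = (\<Sum>k\<le>n. cc a b n k * (b * pochhammer (-y) (Suc k) + (of_nat n - a - b * of_nat k) * pochhammer (-y) k))"
    by (simp add: sum_distrib_right poch_step mult.assoc)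
  also have "\<dots> = (\<Sum>k\<le>n. b * cc a b n k * pochhammer (-y) (Suc k)) + (\<Sum>k\<le>n. (of_nat n - a - b * of_nat k) * cc a b n k * pochhammer (-y) k)"
    unfolding sum.distrib[symmetric] by (rule sum.cong) (simp_all add: algebra_simps)
  also have "\<dots> = (\<Sum>k\<le>Suc n. (if k = 0 then 0 else b * cc a b n (k - 1)) * pochhammer (-y) k) + (\<Sum>k\<le>Suc n. (of_nat n - a - b * of_nat k) * cc a b n k * pochhammer (-y) k)"
  proof -
    have h1: "(\<Sum>k\<le>Suc n. (if k = 0 then 0 else b * cc a b n (k - 1)) * pochhammer (-y) k) = (\<Sum>k\<le>n. b * cc a b n k * pochhammer (-y) (Suc k))"
      by (simp only: sum.atMost_Suc_shift) simp
    have h2: "(\<Sum>k\<le>Suc n. (of_nat n - a - b * of_nat k) * cc a b n k * pochhammer (-y) k) = (\<Sum>k\<le>n. (of_nat n - a - b * of_nat k) * cc a b n k * pochhammer (-y) k)"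
      by (simp add: cc_zero)
    show ?thesis unfolding h1 h2 ..
  qed
  also have "\<dots> = (\<Sum>k\<le>Suc n. cc a b (Suc n) k * pochhammer (-y) k)"
    unfolding sum.distrib[symmetric] by (rule sum.cong) (simp_all add: algebra_simps)
  finally show ?case .
qed

lemma inner:
  assumes "m \<le> k"
  shows "(\<Sum>j=m..k. (-1)^(k-j) * real (k choose j) * real (j choose m)) = (if m = k then 1 else 0)"
proof -
  define d where "d = k - m"
  have "(\<Sum>j=m..k. (-1)^(k-j) * real (k choose j) * real (j choose m))
      = (\<Sum>j=m..k. real (k choose m) * ((-1)^(k-j) * real ((k - m) choose (j - m))))"
    apply (rule sum.cong, simp)
    apply (subst mult.assoc, subst of_nat_mult[symmetric], subst choose_mult)
    by auto
  also have "\<dots> = real (k choose m) * (\<Sum>j=m..k. (-1)^(k-j) * real ((k - m) choose (j - m)))"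
    by (simp add: sum_distrib_left)
  also have "(\<Sum>j=m..k. (-1)^(k-j) * real ((k - m) choose (j - m))) = (\<Sum>t\<le>d. (-1)^(d-t) * real (d choose t))"
  proof -
    have "(\<Sum>j=m..k. (-1)^(k-j) * real ((k - m) choose (j - m))) = (\<Sum>t=0..d. (-1)^(k-(t+m)) * real ((k - m) choose (t+m - m)))"
      using sum.shift_bounds_cl_nat_ivl[of "\<lambda>j. (-1)^(k-j) * real ((k - m) choose (j - m))" 0 m d] assms
      by (simp add: d_def)
    also have "\<dots> = (\<Sum>t\<le>d. (-1)^(d-t) * real (d choose t))"
      by (simp add: d_def atLeast0AtMost algebra_simps)
    finally show ?thesis .
  qed
  also have "(\<Sum>t\<le>d. (-1)^(d-t) * real (d choose t)) = (-1)^d * (\<Sum>t\<le>d. (-1)^t * real (d choose t))"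
    unfolding sum_distrib_left
  proof (rule sum.cong, simp)
    fix t assume "t \<in> {..d}"
    then have e: "(-1::real)^d = (-1)^(d-t) * (-1)^t"
      by (simp add: power_add[symmetric])
    have f: "(-1::real)^t * (-1)^t = 1"
      by (simp add: power_add[symmetric])
    have "(-1::real)^(d-t) = (-1)^d * (-1)^t"
      unfolding e mult.assoc f by simp
    then show "(-1)^(d-t) * real (d choose t) = (-1)^d * ((-1)^t * real (d choose t))" by simp
  qed
  finally show ?thesis
    using choose_alternating_sum[of d, where 'a=real] by (cases "d = 0") (auto simp: d_def)
qed

lemma inversion:
  assumes "\<And>j. f j = (\<Sum>m\<le>j. real (j choose m) * g m)"
  shows "(\<Sum>j\<le>k. (-1)^(k-j) * real (k choose j) * f j) = g k"
proof -
  have "(\<Sum>j\<le>k. (-1)^(k-j) * real (k choose j) * f j)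
      = (\<Sum>j\<le>k. \<Sum>m\<le>k. (-1)^(k-j) * real (k choose j) * (real (j choose m) * g m))"
  proof (rule sum.cong, simp)
    fix j assume "j \<in> {..k}"
    then have "(\<Sum>m\<le>j. real (j choose m) * g m) = (\<Sum>m\<le>k. real (j choose m) * g m)"
      by (intro sum.mono_neutral_left) auto
    then show "(-1)^(k-j) * real (k choose j) * f j = (\<Sum>m\<le>k. (-1)^(k-j) * real (k choose j) * (real (j choose m) * g m))"
      by (simp add: assms sum_distrib_left)
  qed
  also have "\<dots> = (\<Sum>m\<le>k. \<Sum>j\<le>k. (-1)^(k-j) * real (k choose j) * (real (j choose m) * g m))"
    by (rule sum.swap)
  also have "\<dots> = (\<Sum>m\<le>k. g m * (if m = k then 1 else 0))"
  proof (rule sum.cong, simp)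
    fix m assume m: "m \<in> {..k}"
    have "(\<Sum>j\<le>k. (-1)^(k-j) * real (k choose j) * (real (j choose m) * g m))
        = (\<Sum>j=m..k. (-1)^(k-j) * real (k choose j) * (real (j choose m) * g m))"
      by (intro sum.mono_neutral_right) auto
    also have "\<dots> = g m * (\<Sum>j=m..k. (-1)^(k-j) * real (k choose j) * real (j choose m))"
      by (simp add: sum_distrib_left algebra_simps)
    also have "\<dots> = g m * (if m = k then 1 else 0)"
      using inner[of m k] m by simp
    finally show "(\<Sum>j\<le>k. (-1)^(k-j) * real (k choose j) * (real (j choose m) * g m)) = g m * (if m = k then 1 else 0)" .
  qed
  also have "\<dots> = (\<Sum>m\<le>k. if m = k then g m else 0)" by (rule sum.cong) auto
  also have "\<dots> = g k" by simp
  finally show ?thesis .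
qed

lemma poch_nat: "pochhammer (- real j) m = (-1)^m * fact m * real (j choose m)"
proof -
  have "real (j choose m) = (-1)^m * pochhammer (- real j) m / fact m"
    by (simp add: binomial_gbinomial gbinomial_pochhammer)
  then have "(-1)^m * fact m * real (j choose m) = ((-1)^m * (-1)^m) * pochhammer (- real j) m"
    by simp
  also have "(-1::real)^m * (-1)^m = 1" by (simp add: power_add[symmetric])
  finally show ?thesis by simp
qed

lemma cc_S: "cc a b n k = (-1)^k * S_ab a b n k"
proof -
  define g where "g m = cc a b n m * (-1)^m * fact m" for m
  define f where "f j = pochhammer (- a - b * real j) n" for j
  have fj: "f j = (\<Sum>m\<le>j. real (j choose m) * g m)" for j
  proof -
    have "f j = (\<Sum>m\<le>n. real (j choose m) * g m)"
      unfolding f_def expand g_def poch_nat by (rule sum.cong) auto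
    also have "\<dots> = (\<Sum>m\<le>max n j. real (j choose m) * g m)"
      by (intro sum.mono_neutral_left) (auto simp: g_def cc_zero)
    also have "\<dots> = (\<Sum>m\<le>j. real (j choose m) * g m)"
      by (intro sum.mono_neutral_right) auto
    finally show ?thesis .
  qed
  have "S_ab a b n k = 1 / fact k * (\<Sum>j\<le>k. (-1)^(k-j) * real (k choose j) * f j)"
    unfolding S_ab_def f_def by (simp add: atLeast0AtMost)
  also have "\<dots> = 1 / fact k * g k" using inversion[of f g k] fj by simp
  also have "\<dots> = cc a b n k * (-1)^k" by (simp add: g_def)
  finally have "S_ab a b n k = cc a b n k * (-1)^k" .
  then have "(-1)^k * S_ab a b n k = cc a b n k * ((-1)^k * (-1)^k)" by simp
  also have "(-1::real)^k * (-1)^k = 1" by (simp add: power_add[symmetric])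
  finally show ?thesis by simp
qed

lemma part1:
  fixes \<alpha> \<alpha>' \<beta> \<beta>' x :: real
  assumes "\<beta>' \<noteq> 0"
  shows "pochhammer (- \<alpha> - \<beta> * x) n =
           (\<Sum>j = 0..n. (-1) ^ j * S_ab (\<alpha> - \<alpha>' / \<beta>' * \<beta>) (\<beta> / \<beta>') n j
                          * pochhammer (- \<alpha>' - \<beta>' * x) j)"
proof -
  define a2 where "a2 = \<alpha> - \<alpha>' / \<beta>' * \<beta>"
  define b2 where "b2 = \<beta> / \<beta>'"
  define y where "y = \<alpha>' + \<beta>' * x"
  have e1: "- \<alpha> - \<beta> * x = - a2 - b2 * y"
    using assms by (simp add: a2_def b2_def y_def field_simps)
  have e2: "- \<alpha>' - \<beta>' * x = - y" by (simp add: y_def)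
  show ?thesis
    unfolding e1 e2 expand a2_def[symmetric] b2_def[symmetric] atLeast0AtMost cc_S
    by (simp add: mult.assoc)
qed

lemma S_zero: "n < k \<Longrightarrow> S_ab a b n k = 0"
  using cc_S[of a b n k] cc_zero[of n k a b] by simp

theorem mainTheorem15:
  fixes \<alpha> \<alpha>' \<beta> \<beta>' x :: real and n k :: nat
  assumes "\<beta>' \<noteq> 0" and "k \<le> n"
  shows "(pochhammer (- \<alpha> - \<beta> * x) n =
           (\<Sum>j = 0..n. (-1) ^ j * S_ab (\<alpha> - \<alpha>' / \<beta>' * \<beta>) (\<beta> / \<beta>') n j
                          * pochhammer (- \<alpha>' - \<beta>' * x) j)) \<and>
         (S_ab \<alpha> \<beta> n k =
           (\<Sum>j = k..n. (-1) ^ j * S_ab (\<alpha> - \<alpha>' / \<beta>' * \<beta>) (\<beta> / \<beta>') n j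
                          * S_ab \<alpha>' \<beta>' j k))"
proof
  show "pochhammer (- \<alpha> - \<beta> * x) n =
           (\<Sum>j = 0..n. (-1) ^ j * S_ab (\<alpha> - \<alpha>' / \<beta>' * \<beta>) (\<beta> / \<beta>') n j
                          * pochhammer (- \<alpha>' - \<beta>' * x) j)"
    using part1[OF assms(1)] .
  define T where "T j = (-1) ^ j * S_ab (\<alpha> - \<alpha>' / \<beta>' * \<beta>) (\<beta> / \<beta>') n j" for j
  have "S_ab \<alpha> \<beta> n k = 1 / fact k * (\<Sum>i = 0..k. (-1)^(k-i) * of_nat (k choose i) *
           (\<Sum>j = 0..n. T j * pochhammer (- \<alpha>' - \<beta>' * of_nat i) j))"
  proof -
    have P: "\<And>x. pochhammer (- \<alpha> - \<beta> * x) n = (\<Sum>j = 0..n. T j * pochhammer (- \<alpha>' - \<beta>' * x) j)"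
      unfolding T_def by (rule part1[OF assms(1)])
    show ?thesis unfolding S_ab_def[of \<alpha> \<beta> n k] by (simp only: P)
  qed
  also have "\<dots> = (\<Sum>j = 0..n. T j * (1 / fact k * (\<Sum>i = 0..k. (-1)^(k-i) * of_nat (k choose i) *
           pochhammer (- \<alpha>' - \<beta>' * of_nat i) j)))"
    by (simp add: sum_distrib_left sum_distrib_right algebra_simps sum.swap[of _ "{0..k}"])
  also have "\<dots> = (\<Sum>j = 0..n. T j * S_ab \<alpha>' \<beta>' j k)"
    unfolding S_ab_def ..
  also have "\<dots> = (\<Sum>j = k..n. T j * S_ab \<alpha>' \<beta>' j k)"
    by (intro sum.mono_neutral_right) (auto simp: S_zero)
  finally show "S_ab \<alpha> \<beta> n k =
           (\<Sum>j = k..n. (-1) ^ j * S_ab (\<alpha> - \<alpha>' / \<beta>' * \<beta>) (\<beta> / \<beta>') n j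
                          * S_ab \<alpha>' \<beta>' j k)" unfolding T_def .
qed

end
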